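(* Let $J$ be a finite set and $F:\{0,1\}^J\to\mathbb{Q}_{\ge0}$. Then $F$ is windable if and only if $F_\oplus$ is even-windable.
   Context: For $x,y\in\{0,1\}^I$, $x\oplus y$ is coordinatewise addition mod 2, and $\mathbf S$ is the characteristic vector of $S\subseteq I$. $1+J$ denotes the disjoint union of $\{1\}$ and $J$, with elements of $\{0,1\}^{1+J}$ written $(p;x)$, $p\in\{0,1\}$, $x\in\{0,1\}^J$. Define $F_\oplus:\{0,1\}^{1+J}\to\mathbb{Q}_{\ge0}$ by $F_\oplus(p;x)=F(x)$ if $p+\sum_{i\in J}x_i$ is even and $0$ otherwise. For $z\in\{0,1\}^I$, $\mathrm{Match}(z)$ is the set of partitions of $\{i:z_i=1\}$ into pairs, and $\mathrm{Match}'(z)$ the set of partitions of $\{i:z_i=1\}$ into blocks of size 1 or 2. $G:\{0,1\}^I\to\mathbb{Q}_{\ge0}$ is even-windable if there exist $B(x,y,M)\ge0$ for all $x,y\in\{0,1\}^I$, $M\in\mathrm{Match}(x\oplus y)$, with $G(x)G(y)=\sum_{M\in\mathrm{Match}(x\oplus y)}B(x,y,M)$ for all $x,y$, and $B(x,y,M)=B(x\oplus\mathbf S,y\oplus\mathbf S,M)$ for all $x,y$ and all $S\in M\in\mathrm{Match}(x\oplus y)$. $G$ is windable if the same holds with $\mathrm{Match}$ replaced everywhere by $\mathrm{Match}'$. *)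

theory Defs
  imports Complex_Main "HOL-Library.Disjoint_Sets"
begin

text \<open>Elements of {0,1}^I are modelled as functions I \<Rightarrow> bool on a finite type I.\<close>

definition bxor :: "('i \<Rightarrow> bool) \<Rightarrow> ('i \<Rightarrow> bool) \<Rightarrow> ('i \<Rightarrow> bool)" where
  "bxor x y = (\<lambda>i. x i \<noteq> y i)"

definition charvec :: "'i set \<Rightarrow> ('i \<Rightarrow> bool)" where
  "charvec S = (\<lambda>i. i \<in> S)"

definition Match :: "('i \<Rightarrow> bool) \<Rightarrow> 'i set set set" where
  "Match z = {M. partition_on {i. z i} M \<and> (\<forall>S\<in>M. card S = 2)}"

definition Match' :: "('i \<Rightarrow> bool) \<Rightarrow> 'i set set set" where
  "Match' z = {M. partition_on {i. z i} M \<and> (\<forall>S\<in>M. card S = 1 \<or> card S = 2)}"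

definition winding_wrt ::
  "(('i \<Rightarrow> bool) \<Rightarrow> 'i set set set) \<Rightarrow> (('i::finite \<Rightarrow> bool) \<Rightarrow> rat) \<Rightarrow> bool" where
  "winding_wrt Mt G \<longleftrightarrow>
     (\<exists>B :: ('i \<Rightarrow> bool) \<Rightarrow> ('i \<Rightarrow> bool) \<Rightarrow> 'i set set \<Rightarrow> rat.
        (\<forall>x y. \<forall>M\<in>Mt (bxor x y). B x y M \<ge> 0) \<and>
        (\<forall>x y. G x * G y = (\<Sum>M\<in>Mt (bxor x y). B x y M)) \<and>
        (\<forall>x y. \<forall>M\<in>Mt (bxor x y). \<forall>S\<in>M.
            B x y M = B (bxor x (charvec S)) (bxor y (charvec S)) M))"

definition even_windable :: "(('i::finite \<Rightarrow> bool) \<Rightarrow> rat) \<Rightarrow> bool" where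
  "even_windable G \<longleftrightarrow> winding_wrt Match G"

definition windable :: "(('i::finite \<Rightarrow> bool) \<Rightarrow> rat) \<Rightarrow> bool" where
  "windable G \<longleftrightarrow> winding_wrt Match' G"

text \<open>F_oplus on {0,1}^(1+J); 1+J is modelled as 'j option, None being the extra coordinate.\<close>
definition F_oplus :: "(('j::finite \<Rightarrow> bool) \<Rightarrow> rat) \<Rightarrow> ('j option \<Rightarrow> bool) \<Rightarrow> rat" where
  "F_oplus F z = (if even (of_bool (z None) + (\<Sum>j\<in>UNIV. of_bool (z (Some j)) :: nat))
                  then F (\<lambda>j. z (Some j)) else 0)"

end

theory Submission imports Defs begin

definition tot :: "('a::finite \<Rightarrow> bool) \<Rightarrow> nat" where "tot z = card {u. z u}"

lemma card_opt: "card {u. (z::'j::finite option \<Rightarrow> bool) u} = of_bool (z None) + card {j. z (Some j)}"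
proof -
  have "{u. z u} = Some ` {j. z (Some j)} \<union> {u. u = (None::'j option) \<and> z None}" by (rule set_eqI, case_tac x, auto)
  moreover have "card (Some ` {j. z (Some j)} \<union> {u. u = (None::'j option) \<and> z None}) = card (Some ` {j. z (Some j)}) + card {u. u = (None::'j option) \<and> z None}"
    by (subst card_Un_disjoint) auto
  moreover have "card (Some ` {j. z (Some j)}) = card {j. z (Some j)}" by (simp add: card_image)
  moreover have "card {u. u = (None::'j option) \<and> z None} = of_bool (z None)" by (cases "z None") auto
  ultimately show ?thesis by simp
qed

lemma F_oplus_alt: "F_oplus F z = (if even (tot z) then F (\<lambda>j. z (Some j)) else 0)"
  unfolding F_oplus_def tot_def by (simp add: card_opt)

lemma tot_bxor: "tot (bxor z w) + 2 * card {u. z u \<and> w u} = tot z + tot w"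
proof -
  have "(\<Sum>u\<in>UNIV. of_bool (bxor z w u) + 2 * of_bool (z u \<and> w u) :: nat) = (\<Sum>u\<in>UNIV. of_bool (z u) + of_bool (w u))"
    by (rule sum.cong) (auto simp: bxor_def)
  then show ?thesis unfolding tot_def by (simp add: sum.distrib sum_distrib_left[symmetric] del: sum_of_bool_eq) (simp)
qed

lemma tot_even_bxor: "even (tot z) \<Longrightarrow> even (tot w) \<Longrightarrow> even (tot (bxor z w))"
  using tot_bxor[of z w] by (metis dvd_add_right_iff dvd_triv_left even_add)

lemma tot_charvec: "tot (charvec S) = card S" by (simp add: tot_def charvec_def)

lemma par_aux: "(a::nat) + 2 * c = b + 2 \<Longrightarrow> even a = even b" by presburger

lemma tot_flip2: "card S = 2 \<Longrightarrow> even (tot (bxor z (charvec S))) = even (tot z)"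
proof -
  assume "card S = 2"
  then have "tot (bxor z (charvec S)) + 2 * card {u. z u \<and> charvec S u} = tot z + 2"
    using tot_bxor[of z "charvec S"] by (simp add: tot_charvec)
  then show ?thesis using par_aux by blast
qed

lemma pm_exists: "finite U \<Longrightarrow> even (card U) \<Longrightarrow> \<exists>M. partition_on U M \<and> (\<forall>S\<in>M. card S = 2)"
proof (induction "card U" arbitrary: U rule: less_induct)
  case less
  show ?case
  proof (cases "U = {}")
    case True then show ?thesis by (auto simp: partition_on_empty)
  next
    case False
    then obtain a where a: "a \<in> U" by auto
    have "card (U - {a}) = card U - 1" using a less by simp
    moreover have "card U \<noteq> 0" using False less by simp
    moreover have c2: "card U \<ge> 2" using \<open>card U \<noteq> 0\<close> less(3) by presburger
    ultimately have "card (U - {a}) > 0" by simp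
    then have "U - {a} \<noteq> {}" by (metis card.empty less_irrefl)
    then obtain b where b: "b \<in> U" "b \<noteq> a" by auto
    let ?U = "U - {a,b}"
    have cU: "card ?U = card U - 2" using a b less by (simp add: card_Diff_subset)
    have "card ?U < card U" "even (card ?U)" using c2 cU less(3) by auto
    then obtain M where M: "partition_on ?U M" "\<forall>S\<in>M. card S = 2"
      using less(1)[of ?U] less(2) by auto
    have "disjnt {a,b} (\<Union>M)" using partition_onD1[OF M(1)] by (auto simp: disjnt_def)
    then have "partition_on U (insert {a,b} M)" using M a b by (simp add: partition_on_insert)
    then show ?thesis using M b by auto
  qed
qed


lemma bxor_charvec_Un: "A \<inter> C = {} \<Longrightarrow> bxor x (charvec (A \<union> C)) = bxor (bxor x (charvec C)) (charvec A)"
  by (auto simp: bxor_def charvec_def fun_eq_iff)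

lemma bxor_flip_same: "bxor (bxor x c) (bxor y c) = bxor x y"
  by (auto simp: bxor_def fun_eq_iff)

lemma inv_union:
  fixes B :: "('i::finite \<Rightarrow> bool) \<Rightarrow> ('i \<Rightarrow> bool) \<Rightarrow> 'i set set \<Rightarrow> rat"
  assumes inv: "\<forall>x y. \<forall>M\<in>Mt (bxor x y). \<forall>S\<in>M. B x y M = B (bxor x (charvec S)) (bxor y (charvec S)) M"
    and M: "M \<in> Mt (bxor x y)" and dis: "disjoint M" and T: "T \<subseteq> M"
  shows "B x y M = B (bxor x (charvec (\<Union>T))) (bxor y (charvec (\<Union>T))) M"
proof -
  have "finite T" by simp
  then show ?thesis using T
  proof (induction T rule: finite_induct)
    case empty
    have "bxor x (charvec {}) = x" "bxor y (charvec {}) = y" by (auto simp: bxor_def charvec_def)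
    then show ?case by simp
  next
    case (insert A T)
    let ?C = "\<Union>T"
    have AM: "A \<in> M" and TM: "T \<subseteq> M" using insert by auto
    have "A \<inter> ?C = {}"
    proof -
      have "\<And>T'. T' \<in> T \<Longrightarrow> A \<inter> T' = {}"
        using dis AM TM insert(2) unfolding pairwise_def disjnt_def by (metis subsetD)
      then show ?thesis by blast
    qed
    then have e1: "\<And>x. bxor x (charvec (\<Union>(insert A T))) = bxor (bxor x (charvec ?C)) (charvec A)"
      using bxor_charvec_Un by simp
    have M2: "M \<in> Mt (bxor (bxor x (charvec ?C)) (bxor y (charvec ?C)))"
      using M by (simp add: bxor_flip_same)
    have "B x y M = B (bxor x (charvec ?C)) (bxor y (charvec ?C)) M" using insert TM by simp
    also have "\<dots> = B (bxor (bxor x (charvec ?C)) (charvec A)) (bxor (bxor y (charvec ?C)) (charvec A)) M"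
      using inv M2 AM by blast
    finally show ?case using e1 by simp
  qed
qed

definition sing :: "'j set set \<Rightarrow> 'j set" where "sing M = \<Union>{T\<in>M. card T = 1}"
definition Uset :: "('j option \<Rightarrow> bool) \<Rightarrow> 'j set set \<Rightarrow> 'j option set" where
  "Uset d M = Some ` sing M \<union> {u. u = None \<and> d None}"
definition pm :: "'a set \<Rightarrow> 'a set set" where "pm U = (SOME M. partition_on U M \<and> (\<forall>S\<in>M. card S = 2))"
definition phi :: "('j option \<Rightarrow> bool) \<Rightarrow> 'j set set \<Rightarrow> 'j option set set" where
  "phi d M = (\<lambda>T. Some ` T) ` {T\<in>M. card T = 2} \<union> pm (Uset d M)"

lemma phi_Match:
  fixes d :: "'j::finite option \<Rightarrow> bool"
  assumes MM: "M \<in> Match' (\<lambda>j. d (Some j))" and ev: "even (tot d)"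
  shows "phi d M \<in> Match d" and "\<forall>S\<in>phi d M. \<forall>j\<in>Some -` S. \<exists>T\<in>M. j \<in> T \<and> T \<subseteq> Some -` S"
proof -
  let ?P = "{T\<in>M. card T = 2}" and ?Q = "{T\<in>M. card T = 1}" and ?U = "Uset d M"
  have pM: "partition_on {j. d (Some j)} M" and cM: "\<forall>S\<in>M. card S = 1 \<or> card S = 2"
    using MM by (auto simp: Match'_def)
  have disM: "disjoint M" using pM partition_onD2 by blast
  have UM: "\<Union>M = {j. d (Some j)}" using pM partition_onD1 by blast
  have PQ: "M = ?P \<union> ?Q" "?P \<inter> ?Q = {}" using cM by auto
  have cQ: "card (sing M) = card ?Q"
  proof -
    have "card (sing M) = sum card ?Q" unfolding sing_def
      by (rule card_Union_disjoint) (auto intro: pairwise_subset[OF disM])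
    also have "\<dots> = card ?Q" by simp
    finally show ?thesis .
  qed
  have cD: "card {j. d (Some j)} = 2 * card ?P + card ?Q"
  proof -
    have "card {j. d (Some j)} = sum card M" unfolding UM[symmetric]
      by (rule card_Union_disjoint) (auto intro: disM)
    also have "\<dots> = sum card (?P \<union> ?Q)" using PQ(1) by simp
    also have "\<dots> = sum card ?P + sum card ?Q" using PQ(2) by (intro sum.union_disjoint) auto
    also have "\<dots> = 2 * card ?P + card ?Q" by simp
    finally show ?thesis .
  qed
  have cU: "card ?U = card ?Q + of_bool (d None)"
  proof -
    have "card ?U = card (Some ` sing M) + card {u. u = (None::'j option) \<and> d None}"
      unfolding Uset_def by (subst card_Un_disjoint) auto
    moreover have "card (Some ` sing M) = card (sing M)" by (simp add: card_image)
    moreover have "card {u. u = (None::'j option) \<and> d None} = of_bool (d None)" by (cases "d None") auto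
    ultimately show ?thesis using cQ by simp
  qed
  have "tot d = of_bool (d None) + card {j. d (Some j)}" unfolding tot_def by (rule card_opt)
  then have "even (card ?U)" using ev cU cD by simp
  then have "\<exists>M. partition_on ?U M \<and> (\<forall>S\<in>M. card S = 2)" by (intro pm_exists) simp
  then have "partition_on ?U (pm ?U) \<and> (\<forall>S\<in>pm ?U. card S = 2)"
    unfolding pm_def by (rule someI_ex)
  then have pmU: "partition_on ?U (pm ?U)" "\<forall>S\<in>pm ?U. card S = 2" by auto
  have Usub: "?U \<subseteq> Some ` \<Union>?Q \<union> {None}" unfolding Uset_def sing_def by auto
  have U1: "\<Union>(pm ?U) = ?U" using pmU partition_onD1 by blast
  show "phi d M \<in> Match d"
    unfolding Match_def
  proof (intro CollectI conjI ballI)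
    show "partition_on {u. d u} (phi d M)"
    proof (rule partition_onI)
      show "\<Union>(phi d M) = {u. d u}"
      proof -
        have "\<Union>(phi d M) = Some ` \<Union>?P \<union> \<Union>(pm ?U)" unfolding phi_def by auto
        also have "\<dots> = Some ` \<Union>?P \<union> ?U" using U1 by simp
        also have "\<dots> = Some ` \<Union>M \<union> {u. u = None \<and> d None}"
        proof -
          have "\<Union>M = \<Union>?P \<union> \<Union>?Q" using cM by auto
          then show ?thesis unfolding Uset_def sing_def by (simp add: image_Un Un_assoc)
        qed
        also have "\<dots> = {u. d u}" unfolding UM by (rule set_eqI, case_tac x, auto)
        finally show ?thesis .
      qed
    next
      fix p q assume p: "p \<in> phi d M" and q: "q \<in> phi d M" and pq: "p \<noteq> q"
      have dPU: "disjnt (Some ` T1) q" if T1: "T1 \<in> ?P" and q: "q \<in> pm ?U" for T1 q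
      proof -
        have "q \<subseteq> Some ` \<Union>?Q \<union> {None}" using q U1 Usub by blast
        moreover have "T1 \<inter> \<Union>?Q = {}"
        proof -
          have "\<And>T. T \<in> ?Q \<Longrightarrow> T1 \<inter> T = {}"
          proof -
            fix T assume T: "T \<in> ?Q"
            then have "T \<noteq> T1" using T1 by auto
            then show "T1 \<inter> T = {}" using disM T T1 unfolding pairwise_def disjnt_def by auto
          qed
          then show ?thesis by blast
        qed
        ultimately show ?thesis by (auto simp: disjnt_def)
      qed
      show "disjnt p q"
      proof (cases "p \<in> pm ?U")
        case pU: True
        show ?thesis
        proof (cases "q \<in> pm ?U")
          case True
          then show ?thesis using pU pq pmU(1) partition_onD2 unfolding pairwise_def by blast
        next
          case False
          then obtain T2 where "T2 \<in> ?P" "q = Some ` T2" using q unfolding phi_def by auto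
          then show ?thesis using dPU[of T2 p] pU disjnt_sym by blast
        qed
      next
        case pU: False
        then obtain T1 where T1: "T1 \<in> ?P" "p = Some ` T1" using p unfolding phi_def by auto
        show ?thesis
        proof (cases "q \<in> pm ?U")
          case True
          then show ?thesis using dPU[of T1 q] T1 by blast
        next
          case False
          then obtain T2 where T2: "T2 \<in> ?P" "q = Some ` T2" using q unfolding phi_def by auto
          then have "T1 \<noteq> T2" using T1 pq by auto
          then have "T1 \<inter> T2 = {}" using disM T1 T2 unfolding pairwise_def disjnt_def by auto
          then show ?thesis using T1 T2 by (auto simp: disjnt_def)
        qed
      qed
    next
      show "{} \<notin> phi d M" using pmU(2) unfolding phi_def by (auto simp: card_image)
    qed
  next
    fix S assume "S \<in> phi d M"
    then show "card S = 2" using pmU(2) unfolding phi_def by (auto simp: card_image)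
  qed
  show "\<forall>S\<in>phi d M. \<forall>j\<in>Some -` S. \<exists>T\<in>M. j \<in> T \<and> T \<subseteq> Some -` S"
  proof (intro ballI)
    fix S j assume S: "S \<in> phi d M" and j: "j \<in> Some -` S"
    show "\<exists>T\<in>M. j \<in> T \<and> T \<subseteq> Some -` S"
    proof (cases "S \<in> pm ?U")
      case True
      then have "S \<subseteq> ?U" using U1 by blast
      then have "Some j \<in> Some ` \<Union>?Q" using Usub j by auto
      then obtain T where T: "T \<in> M" "card T = 1" "j \<in> T" by auto
      then have "T = {j}" by (metis card_1_singletonE singletonD)
      then show ?thesis using T j by auto
    next
      case False
      then obtain T where "T \<in> M" "S = Some ` T" using S unfolding phi_def by auto
      then show ?thesis using j by auto
    qed
  qed
qed


lemma bxor_Some: "(\<lambda>j. bxor z w (Some j)) = bxor (\<lambda>j. z (Some j)) (\<lambda>j. w (Some j))"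
  by (simp add: bxor_def)

lemma bxor_charvec_Some: "(\<lambda>j. bxor z (charvec S) (Some j)) = bxor (\<lambda>j. z (Some j)) (charvec (Some -` S))"
  by (simp add: bxor_def charvec_def)

lemma fwd:
  fixes F :: "('j::finite \<Rightarrow> bool) \<Rightarrow> rat"
  assumes "windable F"
  shows "even_windable (F_oplus F)"
proof -
  obtain B :: "('j \<Rightarrow> bool) \<Rightarrow> ('j \<Rightarrow> bool) \<Rightarrow> 'j set set \<Rightarrow> rat" where
    Bn: "\<forall>x y. \<forall>M\<in>Match' (bxor x y). B x y M \<ge> 0" and
    Bp: "\<forall>x y. F x * F y = (\<Sum>M\<in>Match' (bxor x y). B x y M)" and
    Bi: "\<forall>x y. \<forall>M\<in>Match' (bxor x y). \<forall>S\<in>M. B x y M = B (bxor x (charvec S)) (bxor y (charvec S)) M"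
    using assms unfolding windable_def winding_wrt_def by blast
  define B' :: "('j option \<Rightarrow> bool) \<Rightarrow> ('j option \<Rightarrow> bool) \<Rightarrow> 'j option set set \<Rightarrow> rat" where
    "B' z w M = (if even (tot z) \<and> even (tot w) then
       (\<Sum>M'\<in>{M'\<in>Match' (bxor (\<lambda>j. z (Some j)) (\<lambda>j. w (Some j))). phi (bxor z w) M' = M}.
          B (\<lambda>j. z (Some j)) (\<lambda>j. w (Some j)) M') else 0)" for z w M
  show ?thesis unfolding even_windable_def winding_wrt_def
  proof (intro exI[of _ B'] conjI allI ballI)
    fix z w :: "'j option \<Rightarrow> bool" and M assume "M \<in> Match (bxor z w)"
    show "B' z w M \<ge> 0" unfolding B'_def using Bn by (auto intro!: sum_nonneg)
  next
    fix z w :: "'j option \<Rightarrow> bool"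
    let ?x = "\<lambda>j. z (Some j)" and ?y = "\<lambda>j. w (Some j)" and ?d = "bxor z w"
    show "F_oplus F z * F_oplus F w = (\<Sum>M\<in>Match (bxor z w). B' z w M)"
    proof (cases "even (tot z) \<and> even (tot w)")
      case True
      then have ev: "even (tot ?d)" using tot_even_bxor by blast
      have img: "phi ?d ` Match' (bxor ?x ?y) \<subseteq> Match ?d"
        using phi_Match(1)[OF _ ev] bxor_Some[of z w] by auto
      have "F_oplus F z * F_oplus F w = F ?x * F ?y" using True by (simp add: F_oplus_alt)
      also have "\<dots> = (\<Sum>M'\<in>Match' (bxor ?x ?y). B ?x ?y M')" using Bp by blast
      also have "\<dots> = (\<Sum>M\<in>Match ?d. \<Sum>M'\<in>{M'\<in>Match' (bxor ?x ?y). phi ?d M' = M}. B ?x ?y M')"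
        by (rule sum.group[symmetric]) (use img in auto)
      also have "\<dots> = (\<Sum>M\<in>Match ?d. B' z w M)" unfolding B'_def using True by simp
      finally show ?thesis .
    next
      case False
      then show ?thesis unfolding B'_def by (auto simp: F_oplus_alt)
    qed
  next
    fix z w :: "'j option \<Rightarrow> bool" and M S assume M: "M \<in> Match (bxor z w)" and S: "S \<in> M"
    have c2: "card S = 2" using M S by (auto simp: Match_def)
    let ?z = "bxor z (charvec S)" and ?w = "bxor w (charvec S)"
    let ?x = "\<lambda>j. z (Some j)" and ?y = "\<lambda>j. w (Some j)" and ?d = "bxor z w" and ?S = "Some -` S"
    have dd: "bxor ?z ?w = ?d" by (rule bxor_flip_same)
    have ez: "even (tot ?z) = even (tot z)" "even (tot ?w) = even (tot w)" using tot_flip2[OF c2] by auto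
    have xx: "(\<lambda>j. ?z (Some j)) = bxor ?x (charvec ?S)" "(\<lambda>j. ?w (Some j)) = bxor ?y (charvec ?S)"
      by (rule bxor_charvec_Some)+
    have xy: "bxor (bxor ?x (charvec ?S)) (bxor ?y (charvec ?S)) = bxor ?x ?y" by (rule bxor_flip_same)
    show "B' z w M = B' ?z ?w M"
    proof (cases "even (tot z) \<and> even (tot w)")
      case False
      then have "\<not> (even (tot ?z) \<and> even (tot ?w))" using ez by simp
      then show ?thesis using False by (simp only: B'_def if_False)
    next
      case True
      then have ev: "even (tot ?d)" using tot_even_bxor by blast
      have "B' ?z ?w M = (\<Sum>M'\<in>{M'\<in>Match' (bxor ?x ?y). phi ?d M' = M}.
            B (bxor ?x (charvec ?S)) (bxor ?y (charvec ?S)) M')"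
        unfolding B'_def using True ez by (simp only: dd xx xy) simp
      also have "\<dots> = (\<Sum>M'\<in>{M'\<in>Match' (bxor ?x ?y). phi ?d M' = M}. B ?x ?y M')"
      proof (rule sum.cong[OF refl])
        fix M' assume "M' \<in> {M'\<in>Match' (bxor ?x ?y). phi ?d M' = M}"
        then have M': "M' \<in> Match' (bxor ?x ?y)" "phi ?d M' = M" by auto
        have M'': "M' \<in> Match' (\<lambda>j. ?d (Some j))" using M' bxor_Some[of z w] by simp
        have blocks: "\<forall>j\<in>?S. \<exists>T\<in>M'. j \<in> T \<and> T \<subseteq> ?S" using phi_Match(2)[OF M'' ev] M'(2) S by auto
        let ?T = "{T\<in>M'. T \<subseteq> ?S}"
        have UT: "\<Union>?T = ?S" using blocks by blast
        have dis: "disjoint M'" using M'(1) by (auto simp: Match'_def partition_on_def)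
        have "B ?x ?y M' = B (bxor ?x (charvec (\<Union>?T))) (bxor ?y (charvec (\<Union>?T))) M'"
          by (rule inv_union[OF Bi M'(1) dis]) auto
        then show "B (bxor ?x (charvec ?S)) (bxor ?y (charvec ?S)) M' = B ?x ?y M'" using UT by simp
      qed
      also have "\<dots> = B' z w M" unfolding B'_def using True by simp
      finally show ?thesis by simp
    qed
  qed
qed


definition ext :: "bool \<Rightarrow> ('j \<Rightarrow> bool) \<Rightarrow> 'j option \<Rightarrow> bool" where
  "ext p x = (\<lambda>u. case u of None \<Rightarrow> p | Some j \<Rightarrow> x j)"
definition liftS :: "'j set \<Rightarrow> 'j option set" where
  "liftS T = Some ` T \<union> {u. u = None \<and> card T = 1}"

lemma ext_Some[simp]: "(\<lambda>j. ext p x (Some j)) = x" by (simp add: ext_def)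

lemma bxor_ext: "bxor (ext p x) (ext q y) = ext (p \<noteq> q) (bxor x y)"
  by (auto simp: ext_def bxor_def fun_eq_iff split: option.split)

lemma sum_F_oplus_ext:
  fixes F :: "('j::finite \<Rightarrow> bool) \<Rightarrow> rat"
  shows "(\<Sum>p\<in>UNIV. F_oplus F (ext p x)) = F x"
proof -
  have "tot (ext p x) = of_bool p + card {j. x j}" for p
    unfolding tot_def by (subst card_opt) (simp add: ext_def)
  then show ?thesis by (simp add: F_oplus_alt UNIV_bool)
qed

lemma card_vim:
  fixes S :: "'j option set"
  assumes "finite S"
  shows "card S = card (Some -` S) + of_bool (None \<in> S)"
proof -
  have "S = Some ` (Some -` S) \<union> {u. u = None \<and> None \<in> S}" by (rule set_eqI, case_tac x, auto)
  moreover have "card (Some ` (Some -` S) \<union> {u. u = None \<and> None \<in> S}) = card (Some ` (Some -` S)) + card {u. u = (None::'j option) \<and> None \<in> S}"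
    using assms by (subst card_Un_disjoint) auto
  moreover have "card (Some ` (Some -` S)) = card (Some -` S)" by (rule card_image) auto
  moreover have "card {u. u = (None::'j option) \<and> None \<in> S} = of_bool (None \<in> S)" by (cases "None \<in> S") auto
  ultimately show ?thesis by metis
qed

lemma liftS_vim: "liftS (Some -` S) = S" if "card S = 2" for S :: "'j option set"
proof -
  have fin: "finite S" using that by (metis card.infinite zero_neq_numeral)
  have "card (Some -` S) = 1 \<longleftrightarrow> None \<in> S" using card_vim[OF fin] that by (cases "None \<in> S") auto
  then show ?thesis unfolding liftS_def by (intro set_eqI, case_tac x) auto
qed

lemma vim_liftS: "Some -` liftS T = T" by (auto simp: liftS_def)

lemma pi_Match:
  fixes D :: "'j::finite option \<Rightarrow> bool"
  assumes M: "M \<in> Match D"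
  shows "(\<lambda>S. Some -` S) ` M \<in> Match' (\<lambda>j. D (Some j))" and "liftS ` (\<lambda>S. Some -` S) ` M = M"
proof -
  have pM: "partition_on {u. D u} M" and c2: "\<forall>S\<in>M. card S = 2" using M by (auto simp: Match_def)
  have cv: "card (Some -` S) = 1 \<or> card (Some -` S) = 2" if "S \<in> M" for S
  proof -
    have "finite S" "card S = 2" using c2 that by auto
    then show ?thesis using card_vim[of S] by (cases "None \<in> S") auto
  qed
  have ne: "{} \<notin> (\<lambda>S. Some -` S) ` M" using cv by force
  have "partition_on (Some -` {u. D u}) ((-`) Some ` M - {{}})" by (rule partition_on_vimage[OF pM])
  moreover have "(-`) Some ` M - {{}} = (\<lambda>S. Some -` S) ` M" using ne by auto
  moreover have "Some -` {u. D u} = {j. D (Some j)}" by auto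
  ultimately have "partition_on {j. D (Some j)} ((\<lambda>S. Some -` S) ` M)" by simp
  then show "(\<lambda>S. Some -` S) ` M \<in> Match' (\<lambda>j. D (Some j))" using cv by (auto simp: Match'_def)
  have "(\<lambda>S. liftS (Some -` S)) ` M = id ` M" by (rule image_cong) (auto simp: c2 liftS_vim)
  then show "liftS ` (\<lambda>S. Some -` S) ` M = M" by (simp add: image_image)
qed

lemma sum_bool_flip: "(\<Sum>p\<in>UNIV. h (p \<noteq> (c::bool))) = (\<Sum>p\<in>UNIV. h p)" for h :: "bool \<Rightarrow> 'a::comm_monoid_add"
  unfolding UNIV_bool by (cases c) (simp_all add: add.commute)

lemma ext_flip: "ext p (bxor x (charvec T)) = bxor (ext (p \<noteq> (card T = 1)) x) (charvec (liftS T))"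
  by (auto simp: ext_def bxor_def charvec_def liftS_def fun_eq_iff split: option.split)

lemma bwd:
  fixes F :: "('j::finite \<Rightarrow> bool) \<Rightarrow> rat"
  assumes "even_windable (F_oplus F)"
  shows "windable F"
proof -
  obtain B :: "('j option \<Rightarrow> bool) \<Rightarrow> ('j option \<Rightarrow> bool) \<Rightarrow> 'j option set set \<Rightarrow> rat" where
    Bn: "\<forall>x y. \<forall>M\<in>Match (bxor x y). B x y M \<ge> 0" and
    Bp: "\<forall>x y. F_oplus F x * F_oplus F y = (\<Sum>M\<in>Match (bxor x y). B x y M)" and
    Bi: "\<forall>x y. \<forall>M\<in>Match (bxor x y). \<forall>S\<in>M. B x y M = B (bxor x (charvec S)) (bxor y (charvec S)) M"
    using assms unfolding even_windable_def winding_wrt_def by blast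
  define g :: "('j \<Rightarrow> bool) \<Rightarrow> ('j \<Rightarrow> bool) \<Rightarrow> 'j set set \<Rightarrow> bool \<Rightarrow> bool \<Rightarrow> rat" where
    "g x y N p q = (if liftS ` N \<in> Match (bxor (ext p x) (ext q y)) then B (ext p x) (ext q y) (liftS ` N) else 0)" for x y N p q
  define B' :: "('j \<Rightarrow> bool) \<Rightarrow> ('j \<Rightarrow> bool) \<Rightarrow> 'j set set \<Rightarrow> rat" where
    "B' x y N = (\<Sum>p\<in>UNIV. \<Sum>q\<in>UNIV. g x y N p q)" for x y N
  show ?thesis unfolding windable_def winding_wrt_def
  proof (intro exI[of _ B'] conjI allI ballI)
    fix x y :: "'j \<Rightarrow> bool" and N assume "N \<in> Match' (bxor x y)"
    show "B' x y N \<ge> 0" unfolding B'_def g_def using Bn by (auto intro!: sum_nonneg)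
  next
    fix x y :: "'j \<Rightarrow> bool"
    have inner: "(\<Sum>N\<in>Match' (bxor x y). g x y N p q) = F_oplus F (ext p x) * F_oplus F (ext q y)" for p q
    proof -
      let ?D = "bxor (ext p x) (ext q y)"
      let ?A = "{N\<in>Match' (bxor x y). liftS ` N \<in> Match ?D}"
      have DS: "(\<lambda>j. ?D (Some j)) = bxor x y" by (simp add: bxor_ext)
      have "(\<Sum>N\<in>Match' (bxor x y). g x y N p q) = (\<Sum>N\<in>?A. B (ext p x) (ext q y) (liftS ` N))"
        unfolding g_def by (simp add: sum.inter_filter)
      also have "\<dots> = (\<Sum>M\<in>(\<lambda>N. liftS ` N) ` ?A. B (ext p x) (ext q y) M)"
      proof (rule sum.reindex[symmetric, unfolded comp_def])
        show "inj_on (\<lambda>N. liftS ` N) ?A"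
        proof (rule inj_on_inverseI)
          fix N show "(\<lambda>S. Some -` S) ` liftS ` N = N" by (simp add: image_image vim_liftS)
        qed
      qed
      also have "(\<lambda>N. liftS ` N) ` ?A = Match ?D"
      proof
        show "(\<lambda>N. liftS ` N) ` ?A \<subseteq> Match ?D" by auto
        show "Match ?D \<subseteq> (\<lambda>N. liftS ` N) ` ?A"
        proof
          fix M assume M: "M \<in> Match ?D"
          have "(\<lambda>S. Some -` S) ` M \<in> ?A" using pi_Match[OF M] DS M by auto
          moreover have "M = liftS ` (\<lambda>S. Some -` S) ` M" using pi_Match(2)[OF M] by simp
          ultimately show "M \<in> (\<lambda>N. liftS ` N) ` ?A" by blast
        qed
      qed
      also have "(\<Sum>M\<in>Match ?D. B (ext p x) (ext q y) M) = F_oplus F (ext p x) * F_oplus F (ext q y)"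
        using Bp by simp
      finally show ?thesis .
    qed
    have "(\<Sum>N\<in>Match' (bxor x y). B' x y N) = (\<Sum>p\<in>UNIV. \<Sum>q\<in>UNIV. \<Sum>N\<in>Match' (bxor x y). g x y N p q)"
      unfolding B'_def by (simp add: sum.swap[of _ "Match' (bxor x y)"])
    also have "\<dots> = (\<Sum>p\<in>UNIV. \<Sum>q\<in>UNIV. F_oplus F (ext p x) * F_oplus F (ext q y))"
      using inner by simp
    also have "\<dots> = (\<Sum>p\<in>UNIV. F_oplus F (ext p x)) * (\<Sum>q\<in>UNIV. F_oplus F (ext q y))"
      by (simp add: sum_product)
    also have "\<dots> = F x * F y" by (simp add: sum_F_oplus_ext)
    finally show "F x * F y = (\<Sum>N\<in>Match' (bxor x y). B' x y N)" by simp
  next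
    fix x y :: "'j \<Rightarrow> bool" and N T assume N: "N \<in> Match' (bxor x y)" and T: "T \<in> N"
    let ?c = "card T = 1" and ?L = "liftS T"
    have LN: "?L \<in> liftS ` N" using T by simp
    have gg: "g (bxor x (charvec T)) (bxor y (charvec T)) N p q = g x y N (p \<noteq> ?c) (q \<noteq> ?c)" for p q
    proof -
      let ?p = "p \<noteq> ?c" and ?q = "q \<noteq> ?c"
      have e: "bxor (ext p (bxor x (charvec T))) (ext q (bxor y (charvec T))) = bxor (ext ?p x) (ext ?q y)"
        unfolding ext_flip by (rule bxor_flip_same)
      show ?thesis
      proof (cases "liftS ` N \<in> Match (bxor (ext ?p x) (ext ?q y))")
        case True
        then have "B (ext ?p x) (ext ?q y) (liftS ` N) = B (bxor (ext ?p x) (charvec ?L)) (bxor (ext ?q y) (charvec ?L)) (liftS ` N)"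
          using Bi LN by blast
        then show ?thesis unfolding g_def e using True by (simp add: ext_flip)
      next
        case False
        then show ?thesis unfolding g_def e by simp
      qed
    qed
    have "B' (bxor x (charvec T)) (bxor y (charvec T)) N = (\<Sum>p\<in>UNIV. \<Sum>q\<in>UNIV. g x y N (p \<noteq> ?c) (q \<noteq> ?c))"
      unfolding B'_def gg by simp
    also have "\<dots> = (\<Sum>p\<in>UNIV. \<Sum>q\<in>UNIV. g x y N (p \<noteq> ?c) q)"
      by (rule sum.cong[OF refl]) (rule sum_bool_flip)
    also have "\<dots> = (\<Sum>p\<in>UNIV. \<Sum>q\<in>UNIV. g x y N p q)"
      by (rule sum_bool_flip[where h = "\<lambda>p. \<Sum>q\<in>UNIV. g x y N p q"])
    finally show "B' x y N = B' (bxor x (charvec T)) (bxor y (charvec T)) N" unfolding B'_def by simp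
  qed
qed

theorem lemma8:
  fixes F :: "('j::finite \<Rightarrow> bool) \<Rightarrow> rat"
  assumes "\<forall>x. F x \<ge> 0"
  shows "windable F \<longleftrightarrow> even_windable (F_oplus F)"
  using fwd bwd by blast

end
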